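(* Let $f,\ell,\hat\ell\in\mathbb{C}[X]$ with $r:=\deg(f)>1$ and $\ell,\hat\ell$ linear, and let $n\ge 2$ be an integer. (1) If $f^{\circ n}=\ell\circ X^{r^n}\circ\hat\ell$, then $f(X)=\ell\big(\alpha\,(\ell^{\circ(-1)}(X))^r\big)$ for some $\alpha\in\mathbb{C}^*$, i.e. $f=\ell\circ\alpha X^r\circ\ell^{\circ(-1)}$. (2) If $f^{\circ n}=\ell\circ T_{r^n}\circ\hat\ell$ and $(r,n)\ne(2,2)$, then $f(X)=\ell\big(T_r(\epsilon\,\ell^{\circ(-1)}(X))\big)$ for some $\epsilon\in\{1,-1\}$.
   Context: $f^{\circ n}$ denotes the $n$-th iterate of $f$ under composition. A linear polynomial has degree exactly $1$; $\ell^{\circ(-1)}$ is its compositional inverse. $T_m$ is the Chebyshev polynomial defined by $T_m(X+X^{-1})=X^m+X^{-m}$. *)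

theory Defs
  imports "HOL-Computational_Algebra.Polynomial"
begin

definition piter :: "nat \<Rightarrow> 'a::comm_ring_1 poly \<Rightarrow> 'a poly" where
  "piter n f = ((\<lambda>g. pcompose f g) ^^ n) [:0, 1:]"

definition linv :: "'a::field poly \<Rightarrow> 'a poly" where
  "linv l = (THE m. pcompose l m = [:0, 1:] \<and> pcompose m l = [:0, 1:])"

text \<open>Chebyshev (Dickson-normalised) polynomial: T_m(X + X^-1) = X^m + X^-m.\<close>
definition cheb :: "nat \<Rightarrow> complex poly" where
  "cheb m = (THE p. \<forall>z::complex. z \<noteq> 0 \<longrightarrow> poly p (z + inverse z) = z ^ m + inverse z ^ m)"

end

theory Submission
  imports Defs "HOL-Computational_Algebra.Fundamental_Theorem_Algebra"
begin


fun chT :: "nat \<Rightarrow> complex poly" where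
  "chT 0 = [:2:]"
| "chT (Suc 0) = [:0,1:]"
| "chT (Suc (Suc n)) = [:0,1:] * chT (Suc n) - chT n"

fun chU :: "nat \<Rightarrow> complex poly" where
  "chU 0 = 0"
| "chU (Suc 0) = 1"
| "chU (Suc (Suc n)) = [:0,1:] * chU (Suc n) - chU n"

lemma two_poly: "(2::'a::comm_ring_1 poly) * p = smult 2 p" "p * (2::'a poly) = smult 2 p"
  by (simp_all add: numeral_poly)

lemma jk_rec:
  fixes z u s :: complex
  assumes "z * u = 1"
  shows "(z + u) * (z^(Suc n) + s * u^(Suc n)) - (z^n + s * u^n) = z^(Suc (Suc n)) + s * u^(Suc (Suc n))"
proof -
  have "(z+u)*(z*A + s*(u*B)) - (A + s*B) = z*(z*A) + s*(u*(u*B))" for A B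
    using assms by algebra
  then show ?thesis by simp
qed

lemma evalT: "z \<noteq> 0 \<Longrightarrow> poly (chT m) (z + inverse z) = z ^ m + inverse z ^ m"
proof (induction m rule: chT.induct)
  case 1 then show ?case by simp
next
  case 2 then show ?case by simp
next
  case (3 n)
  have "poly (chT (Suc (Suc n))) (z + inverse z) = (z + inverse z) * poly (chT (Suc n)) (z + inverse z) - poly (chT n) (z + inverse z)"
    by simp
  also have "\<dots> = (z + inverse z) * (z^(Suc n) + 1 * inverse z^(Suc n)) - (z^n + 1 * inverse z^n)"
    using 3 by simp
  also have "\<dots> = z^(Suc (Suc n)) + 1 * inverse z^(Suc (Suc n))"
    by (rule jk_rec) (use 3 in simp)
  finally show ?case by simp
qed

lemma evalU: "z \<noteq> 0 \<Longrightarrow> poly (chU m) (z + inverse z) * (z - inverse z) = z ^ m - inverse z ^ m"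
proof (induction m rule: chU.induct)
  case 1 then show ?case by simp
next
  case 2 then show ?case by simp
next
  case (3 n)
  have "poly (chU (Suc (Suc n))) (z + inverse z) * (z - inverse z) = (z + inverse z) * (poly (chU (Suc n)) (z + inverse z) * (z - inverse z)) - poly (chU n) (z + inverse z) * (z - inverse z)"
    by (simp add: algebra_simps)
  also have "\<dots> = (z + inverse z) * (z^(Suc n) + (-1) * inverse z^(Suc n)) - (z^n + (-1) * inverse z^n)"
    using 3 by simp
  also have "\<dots> = z^(Suc (Suc n)) + (-1) * inverse z^(Suc (Suc n))"
    by (rule jk_rec) (use 3 in simp)
  finally show ?case by simp
qed

lemma surj_joukowski: "\<exists>z::complex. z \<noteq> 0 \<and> w = z + inverse z"
proof -
  define s where "s = csqrt (w^2 - 4)"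
  have s2: "s^2 = w^2 - 4" unfolding s_def by simp
  define z where "z = (w + s)/2"
  have prod: "z * (w - z) = 1" unfolding z_def using s2 by (simp add: field_simps power2_eq_square)
  then have "z \<noteq> 0" by auto
  moreover have "inverse z = w - z" using prod \<open>z\<noteq>0\<close> by (simp add: field_simps)
  ultimately show ?thesis by (intro exI[of _ z]) auto
qed

lemma poly_eq_joukowski:
  assumes "\<And>z::complex. z \<noteq> 0 \<Longrightarrow> poly p (z + inverse z) = poly q (z + inverse z)"
  shows "p = q"
proof -
  have "poly p = poly q"
  proof
    fix w :: complex
    obtain z where "z \<noteq> 0" "w = z + inverse z" using surj_joukowski by blast
    then show "poly p w = poly q w" using assms by simp
  qed
  then show ?thesis by (simp add: poly_eq_poly_eq_iff)
qed

lemma cheb_eq: "cheb m = chT m"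
  unfolding cheb_def
proof (rule the_equality)
  show "\<forall>z::complex. z \<noteq> 0 \<longrightarrow> poly (chT m) (z + inverse z) = z ^ m + inverse z ^ m"
    using evalT by blast
next
  fix p assume "\<forall>z::complex. z \<noteq> 0 \<longrightarrow> poly p (z + inverse z) = z ^ m + inverse z ^ m"
  then show "p = chT m" by (intro poly_eq_joukowski) (simp add: evalT)
qed

lemma chT_comp: "pcompose (chT a) (chT b) = chT (a * b)"
proof (rule poly_eq_joukowski)
  fix z :: complex assume z: "z \<noteq> 0"
  have "poly (pcompose (chT a) (chT b)) (z + inverse z) = poly (chT a) (z^b + inverse (z^b))"
    using z by (simp add: poly_pcompose evalT power_inverse)
  also have "\<dots> = (z^b)^a + inverse (z^b) ^ a" using z by (simp add: evalT)
  also have "\<dots> = z^(a*b) + inverse z ^ (a*b)"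
    by (simp add: power_inverse flip: power_mult) (simp add: mult.commute)
  finally show "poly (pcompose (chT a) (chT b)) (z + inverse z) = poly (chT (a*b)) (z + inverse z)"
    using z by (simp add: evalT)
qed

lemma chT_neg: "pcompose (chT m) [:0,-1:] = smult ((-1)^m) (chT m)"
proof (rule poly_eq_joukowski)
  fix z :: complex assume z: "z \<noteq> 0"
  have "poly (pcompose (chT m) [:0,-1:]) (z + inverse z) = poly (chT m) (-(z + inverse z))"
    by (simp add: poly_pcompose)
  also have "-(z + inverse z) = (-z) + inverse (-z)" by simp
  also have "poly (chT m) ((-z) + inverse (-z)) = (-z)^m + inverse (-z) ^ m" using z by (intro evalT) simp
  also have "\<dots> = (-1)^m * (z^m + inverse z ^ m)"
    by (simp add: power_minus' field_simps power_inverse) 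
  finally show "poly (pcompose (chT m) [:0,-1:]) (z + inverse z) = poly (smult ((-1)^m) (chT m)) (z + inverse z)"
    using z by (simp add: evalT)
qed

lemma chT_sq: "chT m ^ 2 - 4 = [:-4,0,1:] * chU m ^ 2"
proof (rule poly_eq_joukowski)
  fix z :: complex assume z: "z \<noteq> 0"
  define u where "u = inverse z"
  have zu: "z * u = 1" using z unfolding u_def by simp
  have e: "poly (chU m) (z + u) * (z - u) = z ^ m - u ^ m" using evalU z unfolding u_def by simp
  have zum: "z^m * u^m = 1" using zu by (metis power_mult_distrib power_one)
  have "(z^m + u ^ m)^2 - 4 = (z ^ m - u ^ m)^2"
    using zum by (simp add: power2_eq_square algebra_simps)
  also have "\<dots> = (poly (chU m) (z + u))^2 * ((z + u)^2 - 4)"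
  proof -
    have "(z - u)^2 = (z + u)^2 - 4" using zu by (simp add: power2_eq_square algebra_simps)
    then show ?thesis unfolding e[symmetric] by (simp add: power_mult_distrib)
  qed
  moreover have "poly (chT m ^ 2 - 4) (z + u) = (z^m + u^m)^2 - 4" using z by (simp add: evalT u_def)
  moreover have "poly ([:-4,0,1:] * chU m ^ 2) (z+u) = (poly (chU m) (z + u))^2 * ((z + u)^2 - 4)"
    by (simp add: algebra_simps power2_eq_square)
  ultimately show "poly (chT m ^ 2 - 4) (z + inverse z) = poly ([:-4,0,1:] * chU m ^ 2) (z + inverse z)"
    unfolding u_def by simp
qed

lemma chT_U: "chT (Suc m) = chU (Suc (Suc m)) - chU m \<and> chT (Suc (Suc m)) = chU (Suc (Suc (Suc m))) - chU (Suc m)"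
proof (induction m)
  case 0 then show ?case by (simp add: numeral_poly)
next
  case (Suc m)
  have "chT (Suc (Suc (Suc m))) = [:0,1:] * chT (Suc (Suc m)) - chT (Suc m)" by (simp only: chT.simps)
  also have "\<dots> = [:0,1:]*(chU (Suc(Suc(Suc m))) - chU (Suc m)) - (chU (Suc (Suc m)) - chU m)" using Suc by (simp del: chU.simps chT.simps)
  also have "\<dots> = ([:0,1:]*chU (Suc(Suc(Suc m))) - chU (Suc(Suc m))) - ([:0,1:]* chU (Suc m) - chU m)"
    by (simp only: algebra_simps)
  also have "\<dots> = chU (Suc(Suc(Suc(Suc m)))) - chU (Suc (Suc m))" by (simp only: chU.simps)
  finally have "chT (Suc (Suc (Suc m))) = chU (Suc(Suc(Suc(Suc m)))) - chU (Suc (Suc m))" .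
  with Suc show ?case by blast
qed

lemma pderiv_chT: "pderiv (chT m) = smult (of_nat m) (chU m) \<and> pderiv (chT (Suc m)) = smult (of_nat (Suc m)) (chU (Suc m))"
proof (induction m)
  case 0 then show ?case by (simp add: pderiv_pCons)
next
  case (Suc m)
  have "pderiv (chT (Suc (Suc m))) = chT (Suc m) + [:0,1:] * pderiv (chT (Suc m)) - pderiv (chT m)"
    by (simp add: pderiv_mult pderiv_diff pderiv_pCons algebra_simps)
  also have "\<dots> = chT (Suc m) + smult (of_nat (Suc m)) ([:0,1:] * chU (Suc m)) - smult (of_nat m) (chU m)"
    using Suc by (simp del: chU.simps chT.simps)
  also have "\<dots> = chU (Suc (Suc m)) - chU m + smult (of_nat (Suc m)) (chU (Suc (Suc m)) + chU m) - smult (of_nat m) (chU m)"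
    using chT_U[of m] by (simp only: chU.simps) simp
  also have "\<dots> = smult (of_nat (Suc (Suc m))) (chU (Suc (Suc m)))"
    by (simp add: algebra_simps smult_add_left smult_add_right two_poly del: chU.simps chT.simps)
  finally show ?case using Suc by simp
qed



lemma chT_coeffs:
  "degree (chT m) = m \<and> coeff (chT m) m = (if m = 0 then 2 else 1) \<and>
   (m \<ge> 1 \<longrightarrow> coeff (chT m) (m-1) = 0) \<and> (m \<ge> 2 \<longrightarrow> coeff (chT m) (m-2) = - of_nat m)"
proof (induction m rule: chT.induct)
  case 1 then show ?case by simp
next
  case 2 then show ?case by simp
next
  case (3 n)
  have e: "chT (Suc (Suc n)) = pCons 0 (chT (Suc n)) - chT n" by simp
  have c1: "coeff (chT (Suc (Suc n))) (Suc (Suc n)) = 1"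
    unfolding e using 3 by (simp add: coeff_eq_0)
  have dle: "degree (chT (Suc (Suc n))) \<le> Suc (Suc n)"
    unfolding e using 3 by (intro degree_diff_le) (auto simp: degree_pCons_eq_if)
  have deg: "degree (chT (Suc (Suc n))) = Suc (Suc n)"
    using dle c1 by (metis le_antisym le_degree one_neq_zero)
  have c2: "coeff (chT (Suc (Suc n))) (Suc n) = 0"
    unfolding e using 3 by (simp add: coeff_eq_0)
  have c3: "coeff (chT (Suc (Suc n))) n = - of_nat (Suc (Suc n))"
  proof (cases n)
    case 0 then show ?thesis by simp
  next
    case (Suc k)
    have "coeff (chT (Suc (Suc n))) n = coeff (chT (Suc n)) k - coeff (chT n) n"
      unfolding e Suc by simp
    also have "\<dots> = - of_nat (Suc n) - 1" using 3 Suc by auto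
    finally show ?thesis by simp
  qed
  show ?case using deg c1 c2 c3 by simp
qed

lemma degree_chT [simp]: "degree (chT m) = m" using chT_coeffs by blast
lemma lead_chT: "m \<ge> 1 \<Longrightarrow> coeff (chT m) m = 1" using chT_coeffs[of m] by simp
lemma coeff1_chT: "m \<ge> 1 \<Longrightarrow> coeff (chT m) (m-1) = 0" using chT_coeffs[of m] by simp
lemma coeff2_chT: "m \<ge> 2 \<Longrightarrow> coeff (chT m) (m-2) = - of_nat m" using chT_coeffs[of m] by simp

lemma chT_ode: "[:-4,0,1:] * (pderiv (chT m))^2 = smult (of_nat (m^2)) (chT m ^ 2 - 4)"
proof -
  have "(pderiv (chT m))^2 = smult (of_nat (m^2)) (chU m ^ 2)"
    using pderiv_chT[of m] by (simp add: power2_eq_square)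
  then have "[:-4,0,1:] * (pderiv (chT m))^2 = smult (of_nat (m^2)) ([:-4,0,1:] * chU m ^ 2)"
    by (simp only: mult_smult_right)
  then show ?thesis using chT_sq[of m] by simp
qed

definition Lop :: "complex poly \<Rightarrow> complex poly" where
  "Lop W = [:-4,0,1:] * pderiv (pderiv W) + [:0,1:] * pderiv W"

lemma Lop_lin: "Lop (p - smult c q) = Lop p - smult c (Lop q)"
  unfolding Lop_def by (simp add: pderiv_diff pderiv_smult ring_distribs mult_smult_right smult_add_right del: mult_pCons_left mult_pCons_right)

lemma coeff_Lop:
  assumes "degree W = e"
  shows "coeff (Lop W) e = of_nat (e^2) * coeff W e"
proof -
  have S: "[:-4,0,1:] * P = smult (-4) P + pCons 0 (pCons 0 P)" for P :: "complex poly"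
    by (simp add: algebra_simps)
  have X: "[:0,1:] * P = pCons 0 P" for P :: "complex poly" by simp
  have z: "coeff W (Suc (Suc e)) = 0" using assms by (simp add: coeff_eq_0)
  show ?thesis
  proof (cases e)
    case 0 then show ?thesis using z unfolding Lop_def S X by (simp add: coeff_pderiv)
  next
    case (Suc k)
    show ?thesis
    proof (cases k)
      case 0 then show ?thesis using Suc z unfolding Lop_def S X by (simp add: coeff_pderiv)
    next
      case (Suc j)
      have "coeff (Lop W) e = of_nat ((e-1)*e) * coeff W e + of_nat e * coeff W e"
        using \<open>e = Suc k\<close> Suc z unfolding Lop_def S X by (simp add: coeff_pderiv algebra_simps)
      also have "\<dots> = of_nat (e^2) * coeff W e"
        using \<open>e = Suc k\<close> by (simp add: power2_eq_square algebra_simps)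
      finally show ?thesis .
    qed
  qed
qed

lemma degree_Lop: "degree (Lop W) \<le> degree W"
proof -
  have d2: "degree (pderiv (pderiv W)) = degree W - 2" by (simp add: degree_pderiv)
  have "degree ([:-4,0,1:] * pderiv (pderiv W)) \<le> degree W"
  proof (cases "degree W < 2")
    case True
    then have "degree (pderiv W) = 0" by (simp add: degree_pderiv)
    then have "pderiv (pderiv W) = 0" by (simp add: pderiv_eq_0_iff)
    then show ?thesis by simp
  next
    case False
    have "degree ([:-4,0,1:] * pderiv (pderiv W)) \<le> degree [:-4,0,1::complex:] + degree (pderiv (pderiv W))"
      by (rule degree_mult_le)
    also have "\<dots> \<le> degree W" using False d2 by simp
    finally show ?thesis .
  qed
  moreover have "degree ([:0,1:] * pderiv W) \<le> degree W"
  proof (cases "pderiv W = 0")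
    case True then show ?thesis by simp
  next
    case False
    then have "degree W \<ge> 1" by (simp add: pderiv_eq_0_iff)
    have "degree ([:0,1:] * pderiv W) \<le> degree [:0,1::complex:] + degree (pderiv W)"
      by (rule degree_mult_le)
    also have "\<dots> \<le> degree W" using \<open>degree W \<ge> 1\<close> by (simp add: degree_pderiv)
    finally show ?thesis .
  qed
  ultimately show ?thesis unfolding Lop_def by (intro degree_add_le)
qed



lemma ode_diff:
  assumes H: "Q^2 - 4 = smult \<kappa> ([:-4,0,1:] * (pderiv Q)^2)" and d: "degree Q \<ge> 1"
  shows "Q = smult \<kappa> (Lop Q)"
proof -
  have p4: "pderiv (4::complex poly) = 0" by (simp add: numeral_poly pderiv_pCons)
  have l: "pderiv (Q^2 - 4) = smult 2 (pderiv Q * Q)"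
    by (simp add: pderiv_diff pderiv_mult power2_eq_square p4 two_poly[symmetric] algebra_simps del: mult_pCons_left mult_pCons_right)
  have x2: "(p::complex poly) * [:0,2:] = smult 2 (p * [:0,1:])" for p by simp
  have r: "pderiv (smult \<kappa> ([:-4,0,1:] * (pderiv Q)^2)) = smult 2 (pderiv Q * smult \<kappa> (Lop Q))"
    unfolding Lop_def
    by (simp add: pderiv_smult pderiv_mult power2_eq_square pderiv_pCons two_poly algebra_simps smult_add_right x2 del: mult_pCons_left mult_pCons_right)
  have "smult 2 (pderiv Q * Q) = smult 2 (pderiv Q * smult \<kappa> (Lop Q))"
    using arg_cong[OF H, of pderiv] l r by simp
  then have "smult (1/2) (smult 2 (pderiv Q * Q)) = smult (1/2) (smult 2 (pderiv Q * smult \<kappa> (Lop Q)))"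
    by simp
  then have "pderiv Q * Q = pderiv Q * smult \<kappa> (Lop Q)" by (simp only: smult_smult) simp
  then have "pderiv Q * (Q - smult \<kappa> (Lop Q)) = 0" by (simp add: algebra_simps)
  moreover have "pderiv Q \<noteq> 0" using d by (simp add: pderiv_eq_0_iff)
  ultimately show ?thesis by simp
qed

lemma ode_unique:
  assumes dQ: "degree Q = d" "d \<ge> 1" and H: "Q^2 - 4 = smult \<kappa> ([:-4,0,1:] * (pderiv Q)^2)"
  shows "Q = chT d \<or> Q = - chT d"
proof -
  have LQ: "Q = smult \<kappa> (Lop Q)" using ode_diff[OF H] dQ by simp
  define q where "q = coeff Q d"
  have "Q \<noteq> 0" using dQ by auto
  then have q0: "q \<noteq> 0" unfolding q_def using dQ(1) leading_coeff_0_iff by blast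
  have "q = \<kappa> * (of_nat (d^2) * q)"
    unfolding q_def by (subst LQ) (simp add: coeff_Lop dQ)
  then have "q * (\<kappa> * of_nat (d^2) - 1) = 0" by (simp add: algebra_simps)
  then have kd: "\<kappa> * of_nat (d^2) = 1" using q0 by simp
  define T where "T = chT d"
  have HT: "T^2 - 4 = smult \<kappa> ([:-4,0,1:] * (pderiv T)^2)"
    unfolding T_def chT_ode using kd by simp
  have LT: "T = smult \<kappa> (Lop T)" using ode_diff[OF HT] dQ unfolding T_def by simp
  define W where "W = Q - smult q T"
  have "smult \<kappa> (Lop W) = smult \<kappa> (Lop Q) - smult q (smult \<kappa> (Lop T))"
    unfolding W_def Lop_lin by (simp add: smult_diff_right mult.commute)
  also have "\<dots> = W" using LQ LT W_def by simp
  finally have LW: "W = smult \<kappa> (Lop W)" by simp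
  have W0: "W = 0"
  proof (rule ccontr)
    assume "W \<noteq> 0"
    define e where "e = degree W"
    have dW: "degree W \<le> d" unfolding W_def T_def using dQ
      by (intro degree_diff_le) auto
    have cW: "coeff W d = 0" unfolding W_def T_def q_def using lead_chT[OF dQ(2)] by simp
    have we: "coeff W e \<noteq> 0" unfolding e_def using \<open>W \<noteq> 0\<close> by simp
    have "e < d" using we cW dW unfolding e_def by (cases "degree W = d") auto
    have "coeff W e = \<kappa> * (of_nat (e^2) * coeff W e)"
      by (subst LW) (simp add: coeff_Lop e_def)
    then have "coeff W e * (\<kappa> * of_nat (e^2) - 1) = 0" by (simp add: algebra_simps)
    then have ke: "\<kappa> * of_nat (e^2) = 1" using we by simp
    have "\<kappa> \<noteq> 0" using kd by auto
    with kd ke have "of_nat (e^2) = (of_nat (d^2) :: complex)"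
      by (metis mult_left_cancel)
    then have "e^2 = d^2" using of_nat_eq_iff by blast
    then have "e = d" using power_eq_iff_eq_base[of 2 e d] by simp
    with \<open>e < d\<close> show False by simp
  qed
  then have QT: "Q = smult q T" unfolding W_def by simp
  have "smult (q^2) (T^2) - 4 = smult (q^2) (T^2 - 4)"
  proof -
    have pq: "(pderiv Q)^2 = smult (q^2) ((pderiv T)^2)"
      unfolding QT pderiv_smult by (simp add: power2_eq_square)
    have "Q^2 - 4 = smult \<kappa> (smult (q^2) ([:-4,0,1:] * (pderiv T)^2))"
      using H unfolding pq by (simp only: mult_smult_right)
    also have "\<dots> = smult (q^2) (smult \<kappa> ([:-4,0,1:] * (pderiv T)^2))"
      by (simp only: smult_smult mult.commute)
    finally have "Q^2 - 4 = smult (q^2) (smult \<kappa> ([:-4,0,1:] * (pderiv T)^2))" .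
    then show ?thesis unfolding HT[symmetric] QT by (simp add: power_mult_distrib power2_eq_square)
  qed
  then have "smult (q^2) 4 = (4::complex poly)" by (simp add: algebra_simps smult_diff_right)
  then have "coeff (smult (q^2) 4) 0 = coeff (4::complex poly) 0" by simp
  then have "q^2 = 1" by (simp add: numeral_poly)
  then have "q = 1 \<or> q = -1" by (simp add: power2_eq_1_iff)
  then show ?thesis using QT unfolding T_def by auto
qed



lemma pcompose_idL [simp]: "pcompose [:0,1:] (p::'a::comm_ring_1 poly) = p"
  by (simp add: pcompose_pCons)

lemma lin_dec:
  assumes "degree (l::'a::comm_ring_1 poly) = 1"
  shows "l = [:coeff l 0, coeff l 1:] \<and> coeff l 1 \<noteq> 0"
proof -
  have "coeff l 1 \<noteq> 0" using assms by (metis leading_coeff_0_iff one_neq_zero degree_0)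
  moreover have "l = [:coeff l 0, coeff l 1:]"
    by (rule poly_eqI) (auto simp: coeff_pCons coeff_eq_0 assms split: nat.splits)
  ultimately show ?thesis by simp
qed

lemma pcompose_lin: "pcompose [:a, b:] p = [:a:] + smult b p"
  by (simp add: pcompose_pCons)

lemma linv_ok:
  assumes "degree (l::'a::field poly) = 1"
  shows "pcompose l (linv l) = [:0,1:] \<and> pcompose (linv l) l = [:0,1:] \<and> degree (linv l) = 1"
proof -
  define a b where "a = coeff l 0" and "b = coeff l 1"
  have lab: "l = [:a, b:]" and b0: "b \<noteq> 0" using lin_dec[OF assms] unfolding a_def b_def by auto
  define m where "m = [:-a/b, 1/b:]"
  have c1: "pcompose l m = [:0,1:]" unfolding lab m_def pcompose_lin using b0 by simp
  have c2: "pcompose m l = [:0,1:]" unfolding lab m_def pcompose_lin using b0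
    by (simp add: field_simps)
  have "linv l = m"
    unfolding linv_def
  proof (rule the_equality)
    show "pcompose l m = [:0, 1:] \<and> pcompose m l = [:0, 1:]" using c1 c2 by simp
  next
    fix m' assume h: "pcompose l m' = [:0, 1:] \<and> pcompose m' l = [:0, 1:]"
    have "m' = pcompose m' (pcompose l m)" using c1 by simp
    also have "\<dots> = m" by (simp add: pcompose_assoc h)
    finally show "m' = m" .
  qed
  moreover have "degree m = 1" unfolding m_def using b0 by simp
  ultimately show ?thesis using c1 c2 by simp
qed

lemma pderiv_lin: "pderiv [:a, b:] = [:b:]"
  by (simp add: pderiv_pCons)

lemma ode_lin:
  assumes dmu: "degree \<mu> = 1" and dY: "degree Y = d" "d \<ge> 1"
    and H: "smult s ((\<mu>^2 - 4) * (pderiv Y)^2) = Y^2 - 4"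
  shows "Y = pcompose (chT d) \<mu> \<or> Y = - pcompose (chT d) \<mu>"
proof -
  define \<nu> where "\<nu> = linv \<mu>"
  have inv: "pcompose \<mu> \<nu> = [:0,1:]" "pcompose \<nu> \<mu> = [:0,1:]" "degree \<nu> = 1"
    using linv_ok[OF dmu] unfolding \<nu>_def by auto
  define g b where "g = coeff \<nu> 0" and "b = coeff \<nu> 1"
  have nu: "\<nu> = [:g, b:]" and b0: "b \<noteq> 0" using lin_dec[OF inv(3)] unfolding g_def b_def by auto
  define Z where "Z = pcompose Y \<nu>"
  have dZ: "degree Z = d" unfolding Z_def degree_pcompose using inv dY by simp
  have Z': "pderiv Z = smult b (pcompose (pderiv Y) \<nu>)"
    unfolding Z_def pderiv_pcompose nu pderiv_lin by simp
  have Y'n: "pcompose (pderiv Y) \<nu> = smult (1/b) (pderiv Z)" using Z' b0 by simp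
  have "pcompose (smult s ((\<mu>^2 - 4) * (pderiv Y)^2)) \<nu> = pcompose (Y^2 - 4) \<nu>" using H by simp
  then have "smult s (([:0,1:]^2 - 4) * (smult (1/b) (pderiv Z))^2) = Z^2 - 4"
    unfolding Z_def[symmetric] Y'n[symmetric]
    by (simp add: pcompose_smult pcompose_mult pcompose_diff power2_eq_square inv Z_def numeral_poly)
  then have "Z^2 - 4 = smult (s / b^2) ([:-4,0,1:] * (pderiv Z)^2)"
    by (simp add: power2_eq_square mult_smult_right mult_smult_left field_simps numeral_poly)
  from ode_unique[OF dZ dY(2) this] have "Z = chT d \<or> Z = - chT d" .
  moreover have "Y = pcompose Z \<mu>" unfolding Z_def by (simp flip: pcompose_assoc add: inv)
  ultimately show ?thesis by (auto simp: pcompose_uminus)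
qed



lemma root_exists: "degree (p::complex poly) \<ge> 1 \<Longrightarrow> \<exists>z. poly p z = 0"
  by (rule fundamental_theorem_of_algebra_alt) auto

lemma pcompose_X2m4: "pcompose [:-4,0,1:] (q::complex poly) = q^2 - 4"
proof -
  have "[:-4::complex:] = - [:4:]" by simp
  then show ?thesis by (simp add: pcompose_pCons power2_eq_square numeral_poly)
qed

lemma chT_lin_ode:
  assumes "degree L = 1"
  shows "(L^2 - 4) * (pderiv (pcompose (chT N) L))^2 = smult (of_nat (N^2) * (coeff L 1)^2) ((pcompose (chT N) L)^2 - 4)"
proof -
  define e c where "e = coeff L 0" and "c = coeff L 1"
  have lam: "L = [:e, c:]" using lin_dec[OF assms] unfolding e_def c_def by auto
  have "pcompose ([:-4,0,1:] * (pderiv (chT N))^2) L = pcompose (smult (of_nat (N^2)) (chT N ^ 2 - 4)) L"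
    using chT_ode[of N] by simp
  then have h: "(L^2 - 4) * (pcompose (pderiv (chT N)) L)^2 = smult (of_nat (N^2)) ((pcompose (chT N) L)^2 - 4)"
    by (simp only: pcompose_mult pcompose_smult pcompose_diff pcompose_X2m4 power2_eq_square pcompose_const numeral_poly)
  have d: "pderiv (pcompose (chT N) L) = smult c (pcompose (pderiv (chT N)) L)"
    unfolding pderiv_pcompose lam pderiv_lin by simp
  show ?thesis unfolding d c_def[symmetric]
    using arg_cong[OF h, of "smult (c^2)"]
    by (simp add: power2_eq_square mult_smult_right mult_smult_left smult_smult mult.commute mult.left_commute)
qed

lemma order_lin_sq_m4:
  fixes L :: "complex poly"
  assumes "degree L = 1" and "poly L x1 = 2"
  shows "order x1 (L^2 - 4) = 1"
proof -
  define e c where "e = coeff L 0" and "c = coeff L 1"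
  have lam: "L = [:e, c:]" and c0: "c \<noteq> 0" using lin_dec[OF assms(1)] unfolding e_def c_def by auto
  have x1: "e + c * x1 = 2" using assms(2) lam by (simp add: mult.commute)
  have f: "L^2 - 4 = smult c [:-x1, 1:] * (L + 2)"
  proof -
    have e: "e = 2 - c * x1" using x1 by (simp add: eq_diff_eq)
    show ?thesis unfolding lam e by (simp add: power2_eq_square numeral_poly algebra_simps)
  qed
  have nz: "poly (L + 2) x1 \<noteq> 0" using assms(2) by simp
  have "order x1 (smult c [:-x1, 1:] * (L + 2)) = order x1 (smult c [:-x1, 1:]) + order x1 (L + 2)"
  proof (rule order_mult)
    have "smult c [:-x1, 1:] \<noteq> 0" using c0 by simp
    moreover have "L + 2 \<noteq> 0" using nz by (metis poly_0)
    ultimately show "smult c [:-x1, 1:] * (L + 2) \<noteq> 0" by (simp only: mult_eq_0_iff) simp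
  qed
  also have "\<dots> = 1"
  proof -
    have "order x1 (smult c [:-x1, 1:]) = order x1 [:-x1, 1:]" using c0 by (rule order_smult)
    then show ?thesis using order_power_n_n[of x1 1] order_0I[OF nz] by simp
  qed
  finally show ?thesis using f by simp
qed

lemma mu_identity: fixes p q u1 x :: complex assumes "p - q \<noteq> 0"
  shows "u1 * ((x - p) * (x - q)) = u1 * (p-q)^2/16 * ((-2*(p+q)/(p-q) + x * (4/(p-q)))^2 - 4)"
proof -
  define d where "d = p - q"
  have d: "d \<noteq> 0" using assms d_def by simp
  define a where "a = 4*x - 2*(p+q)"
  define Y where "Y = (x - p) * (x - q)"
  have h: "(-2*(p+q)/d + x * (4/d)) = a/d" unfolding a_def by (simp add: add_divide_distrib diff_divide_distrib algebra_simps)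
  have "(a/d)^2 - 4 = (a^2 - 4*d^2)/d^2"
    using d by (simp add: power_divide field_simps)
  also have "a^2 - 4*d^2 = 16 * Y" unfolding Y_def d_def a_def by (simp add: power2_eq_square algebra_simps)
  finally have E: "(a/d)^2 - 4 = 16 * Y / d^2" .
  have "u1 * d^2/16 * (16 * Y / d^2) = u1 * Y" using d by (simp add: field_simps)
  then show ?thesis unfolding d_def[symmetric] h E Y_def[symmetric] by simp
qed

lemma rigid_outer:
  assumes dL: "degree L = 1" and dA: "degree A = a" "a \<ge> 1" and dB: "degree B \<ge> 1"
    and eq: "pcompose A B = pcompose (chT N) L"
  shows "\<exists>\<mu>. degree \<mu> = 1 \<and> (A = pcompose (chT a) \<mu> \<or> A = - pcompose (chT a) \<mu>)"
proof -
  define K where "K = of_nat (N^2) * (coeff L 1)^2"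
  have "degree (pcompose A B) = N" unfolding eq degree_pcompose using dL by simp
  then have N0: "N \<noteq> 0" unfolding degree_pcompose using dA dB by auto
  have c0: "coeff L 1 \<noteq> 0" using lin_dec[OF dL] by simp
  have K0: "K \<noteq> 0" unfolding K_def using N0 c0 by simp
  have P: "(L^2 - 4) * (pderiv (pcompose A B))^2 = smult K ((pcompose A B)^2 - 4)"
    unfolding eq K_def by (rule chT_lin_ode[OF dL])
  define E where "E = A^2 - 4"
  define F where "F = (pderiv A)^2"
  have EB: "(pcompose A B)^2 - 4 = pcompose E B"
    unfolding E_def by (simp only: pcompose_diff pcompose_mult power2_eq_square numeral_poly pcompose_const)
  have main: "pcompose F B * ((L^2 - 4) * (pderiv B)^2) = smult K (pcompose E B)"
    using P unfolding EB[symmetric] F_def pderiv_pcompose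
    by (simp only: pcompose_mult power2_eq_square ac_simps)
  have F0: "F \<noteq> 0" unfolding F_def using dA by (simp add: pderiv_eq_0_iff)
  have B0: "degree B > 0" using dB by simp
  have FB0: "pcompose F B \<noteq> 0" using F0 pcompose_eq_0[OF _ B0] by blast
  define R where "R = E div F"
  define Rm where "Rm = E mod F"
  have ERR: "E = F * R + Rm" unfolding R_def Rm_def by simp
  have Rm0: "Rm = 0"
  proof (rule ccontr)
    assume Rm0: "Rm \<noteq> 0"
    have "pcompose F B dvd smult K (pcompose E B)" using main by (metis dvdI)
    then have "pcompose F B dvd pcompose E B" using K0 by (simp add: dvd_smult_iff)
    moreover have "pcompose E B = pcompose F B * pcompose R B + pcompose Rm B"
      unfolding ERR by (simp add: pcompose_add pcompose_mult)
    ultimately have "pcompose F B dvd pcompose Rm B" by (simp add: dvd_add_right_iff)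
    moreover have "pcompose Rm B \<noteq> 0" using Rm0 pcompose_eq_0[OF _ B0] by blast
    ultimately have "degree (pcompose F B) \<le> degree (pcompose Rm B)" by (rule dvd_imp_degree_le)
    then have "degree F \<le> degree Rm" unfolding degree_pcompose using B0 by simp
    moreover have "degree Rm < degree F" unfolding Rm_def using F0 Rm0 degree_mod_less' Rm_def by blast
    ultimately show False by simp
  qed
  have EFR: "E = F * R" using ERR Rm0 by simp
  have degE: "degree E = 2 * a"
  proof -
    have "A \<noteq> 0" using dA by auto
    then have "degree (A^2) = 2 * a" using dA by (simp add: degree_power_eq)
    moreover have "E = A^2 + (- 4)" unfolding E_def by simp
    moreover have "degree (- 4 :: complex poly) < degree (A^2)" using \<open>degree (A^2) = 2 * a\<close> dA
      by (simp add: numeral_poly)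
    ultimately show ?thesis using degree_add_eq_left[of "- 4 :: complex poly" "A^2"] by simp
  qed
  have degF: "degree F = 2 * (a - 1)" unfolding F_def using dA
    by (subst degree_power_eq) (auto simp: pderiv_eq_0_iff degree_pderiv)
  have E0: "E \<noteq> 0" using degE dA by auto
  then have R0: "R \<noteq> 0" using EFR by auto
  have degR: "degree R = 2" using degE degF EFR degree_mult_eq[OF F0 R0] dA by simp
  have main2: "(L^2 - 4) * (pderiv B)^2 = smult K (pcompose R B)"
  proof -
    have "pcompose F B * ((L^2 - 4) * (pderiv B)^2) = pcompose F B * smult K (pcompose R B)"
      using main unfolding EFR by (simp only: pcompose_mult mult_smult_right)
    then show ?thesis using FB0 mult_left_cancel by blast
  qed
  obtain p where rp: "poly R p = 0" using root_exists[of R] degR by auto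
  then obtain R1 where R1: "R = [:-p,1:] * R1" by (metis poly_eq_0_iff_dvd dvdE)
  have "R1 \<noteq> 0" using R0 R1 by auto
  then have "degree R = 1 + degree R1" unfolding R1 by (subst degree_mult_eq) auto
  then have dR1: "degree R1 = 1" using degR by simp
  define u0 u1 where "u0 = coeff R1 0" and "u1 = coeff R1 1"
  have R1e: "R1 = [:u0, u1:]" and u10: "u1 \<noteq> 0" using lin_dec[OF dR1] unfolding u0_def u1_def by auto
  define q where "q = - u0 / u1"
  have "R1 = smult u1 [:-q, 1:]" unfolding R1e q_def using u10 by simp
  then have Rpq: "R = smult u1 ([:-p,1:] * [:-q,1:])" using R1 by (simp add: mult_smult_right algebra_simps)
  define e c where "e = coeff L 0" and "c = coeff L 1"
  have lam: "L = [:e, c:]" using lin_dec[OF dL] unfolding e_def c_def by auto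
  define x1 where "x1 = (2 - e) / c"
  have x1: "poly L x1 = 2" unfolding lam x1_def using c0 c_def by (simp add: field_simps)
  have pq: "p \<noteq> q"
  proof
    assume "p = q"
    have l1: "pcompose [:-a,1:] B = B + [:-a:]" for a by (simp add: pcompose_pCons)
    have "pcompose R B = smult u1 (pcompose [:-p,1:] B * pcompose [:-q,1:] B)"
      unfolding Rpq by (simp only: pcompose_smult pcompose_mult)
    then have "pcompose R B = smult u1 ((B + [:-p:])^2)" unfolding l1 \<open>p = q\<close> by (simp add: power2_eq_square)
    with main2 have m3: "(L^2 - 4) * (pderiv B)^2 = smult (K * u1) ((B + [:-p:])^2)" by simp
    have L4: "L^2 - 4 \<noteq> 0"
    proof
      assume "L^2 - 4 = 0"
      then have "degree (L^2) = degree (4::complex poly)" by simp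
      moreover have "L \<noteq> 0" using dL by auto
      ultimately show False using dL by (simp add: degree_power_eq numeral_poly)
    qed
    have B'0: "pderiv B \<noteq> 0" using dB by (simp add: pderiv_eq_0_iff)
    have Bp0: "B + [:-p:] \<noteq> 0"
    proof -
      have "degree (B + [:-p:]) = degree B" by (rule degree_add_eq_left) (use dB in simp)
      then show ?thesis using dB by auto
    qed
    have o2: "order x1 ((pderiv B)^2) = 2 * order x1 (pderiv B)"
      using B'0 by (simp add: order_mult power2_eq_square)
    have "(pderiv B)^2 \<noteq> 0" using B'0 by simp
    then have "order x1 ((L^2 - 4) * (pderiv B)^2) = order x1 (L^2 - 4) + order x1 ((pderiv B)^2)"
      using L4 by (intro order_mult) simp
    then have "order x1 ((L^2 - 4) * (pderiv B)^2) = 1 + 2 * order x1 (pderiv B)"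
      using o2 order_lin_sq_m4[OF dL x1] by simp
    moreover have "order x1 (smult (K * u1) ((B + [:-p:])^2)) = 2 * order x1 (B + [:-p:])"
      using K0 u10 Bp0 by (simp add: order_smult order_mult power2_eq_square)
    ultimately have "1 + 2 * order x1 (pderiv B) = 2 * order x1 (B + [:-p:])" using m3 by simp
    then show False by presburger
  qed
  define \<mu> where "\<mu> = [:-2*(p+q)/(p-q), 4/(p-q):]"
  have dmu: "degree \<mu> = 1" unfolding \<mu>_def using pq by simp
  define s where "s = u1 * (p-q)^2 / 16"
  have Rmu: "R = smult s (\<mu>^2 - 4)"
  proof -
    have "poly R x = poly (smult s (\<mu>^2 - 4)) x" for x
    proof -
      have pq': "p - q \<noteq> 0" using pq by simp
      have "poly R x = u1 * ((x - p) * (x - q))" unfolding Rpq by (simp add: algebra_simps)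
      also have "\<dots> = u1 * (p-q)^2/16 * ((-2*(p+q)/(p-q) + x * (4/(p-q)))^2 - 4)"
        by (rule mu_identity[OF pq'])
      also have "\<dots> = poly (smult s (\<mu>^2 - 4)) x" unfolding \<mu>_def s_def by simp
      finally show ?thesis .
    qed
    then show ?thesis by (simp add: poly_eq_poly_eq_iff fun_eq_iff flip: poly_eq_poly_eq_iff)
  qed
  have H: "smult s ((\<mu>^2 - 4) * (pderiv A)^2) = A^2 - 4"
    using EFR unfolding E_def F_def Rmu by (simp add: mult_smult_left mult.commute)
  from ode_lin[OF dmu dA H] show ?thesis using dmu by blast
qed



lemma rigid_inner:
  assumes dL: "degree L = 1" and dmu: "degree \<mu> = 1" and a1: "a \<ge> 1"
    and dB: "degree B = b" "b \<ge> 1" and sig: "\<sigma>^2 = 1"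
    and eq: "pcompose (smult \<sigma> (pcompose (chT a) \<mu>)) B = pcompose (chT N) L"
  shows "pcompose \<mu> B = pcompose (chT b) L \<or> pcompose \<mu> B = - pcompose (chT b) L"
proof -
  define Y where "Y = pcompose \<mu> B"
  have dY: "degree Y = b" unfolding Y_def degree_pcompose using dmu dB by simp
  define K where "K = of_nat (N^2) * (coeff L 1)^2"
  have Pdef: "pcompose (chT N) L = smult \<sigma> (pcompose (chT a) Y)"
    unfolding eq[symmetric] Y_def by (simp add: pcompose_smult pcompose_assoc)
  have P: "(L^2 - 4) * (pderiv (smult \<sigma> (pcompose (chT a) Y)))^2 = smult K ((smult \<sigma> (pcompose (chT a) Y))^2 - 4)"
    unfolding Pdef[symmetric] K_def by (rule chT_lin_ode[OF dL])
  define G where "G = (pcompose (pderiv (chT a)) Y)^2"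
  have P1: "(pderiv (smult \<sigma> (pcompose (chT a) Y)))^2 = G * (pderiv Y)^2"
    unfolding G_def pderiv_smult pderiv_pcompose using sig
    by (simp add: power_mult_distrib power2_eq_square smult_smult mult.commute mult.left_commute)
  have P2: "(smult \<sigma> (pcompose (chT a) Y))^2 = (pcompose (chT a) Y)^2"
    using sig by (simp add: power2_eq_square smult_smult mult.commute mult.left_commute)
  have TY: "(Y^2 - 4) * G = smult (of_nat (a^2)) ((pcompose (chT a) Y)^2 - 4)"
  proof -
    have "pcompose ([:-4,0,1:] * (pderiv (chT a))^2) Y = pcompose (smult (of_nat (a^2)) (chT a ^ 2 - 4)) Y"
      using chT_ode[of a] by simp
    then show ?thesis unfolding G_def
      by (simp only: pcompose_mult pcompose_smult pcompose_diff pcompose_X2m4 power2_eq_square pcompose_const numeral_poly)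
  qed
  have a0: "of_nat (a^2) \<noteq> (0::complex)" using a1 by simp
  have "(L^2 - 4) * (pderiv Y)^2 * G = smult (K / of_nat (a^2)) ((Y^2 - 4) * G)"
  proof -
    have "(L^2 - 4) * (pderiv Y)^2 * G = smult K ((pcompose (chT a) Y)^2 - 4)"
      using P unfolding P1 P2 by (simp add: ac_simps)
    also have "\<dots> = smult (K / of_nat (a^2)) (smult (of_nat (a^2)) ((pcompose (chT a) Y)^2 - 4))"
      using a0 by simp
    finally show ?thesis unfolding TY .
  qed
  moreover have "G \<noteq> 0"
  proof -
    have "pderiv (chT a) \<noteq> 0" using a1 by (simp add: pderiv_eq_0_iff)
    moreover have "degree Y > 0" using dY dB by simp
    ultimately have "pcompose (pderiv (chT a)) Y \<noteq> 0" using pcompose_eq_0 by blast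
    then show ?thesis unfolding G_def by simp
  qed
  ultimately have "(L^2 - 4) * (pderiv Y)^2 = smult (K / of_nat (a^2)) (Y^2 - 4)"
    by (metis mult_smult_left mult_right_cancel)
  then have H: "smult (of_nat (a^2) / K) ((L^2 - 4) * (pderiv Y)^2) = Y^2 - 4"
  proof -
    have N0: "N \<noteq> 0"
    proof
      assume "N = 0"
      then have "degree (pcompose (chT N) L) = 0" by (simp add: degree_pcompose)
      moreover have "degree (smult \<sigma> (pcompose (chT a) Y)) > 0"
        using sig a1 dY dB by (auto simp: degree_pcompose)
      ultimately show False using Pdef by simp
    qed
    have "K \<noteq> 0" unfolding K_def using N0 lin_dec[OF dL] by simp
    assume h: "(L^2 - 4) * (pderiv Y)^2 = smult (K / of_nat (a^2)) (Y^2 - 4)"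
    show ?thesis unfolding h using \<open>K \<noteq> 0\<close> a0 by simp
  qed
  from ode_lin[OF dL dY dB(2) H] show ?thesis unfolding Y_def .
qed



lemma coeff_const_pos: "n \<ge> 1 \<Longrightarrow> coeff [:g:] n = 0"
  by (cases n) auto

lemma lin_mult: "[:e, c:] * r = smult e r + pCons 0 (smult c r)"
  by simp

lemma comp_lin_coeff:
  fixes p :: "complex poly"
  shows "degree p \<le> Suc m \<Longrightarrow> coeff (pcompose p [:e,c:]) (Suc m) = c^(Suc m) * coeff p (Suc m) \<and>
     coeff (pcompose p [:e,c:]) m = c^m * (coeff p m + of_nat (Suc m) * e * coeff p (Suc m))"
proof (induction p arbitrary: m rule: pCons_induct)
  case 0 then show ?case by simp
next
  case (pCons a p)
  define r where "r = pcompose p [:e,c:]"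
  have comp: "pcompose (pCons a p) [:e,c:] = [:a:] + smult e r + pCons 0 (smult c r)"
    unfolding r_def by (simp add: pcompose_pCons)
  have dp: "degree p \<le> m" using pCons.prems pCons.hyps by (auto simp: degree_pCons_eq_if split: if_splits)
  have dr: "degree r \<le> m" unfolding r_def using dp by (simp add: degree_pcompose)
  have r1: "coeff r (Suc m) = 0" using dr by (simp add: coeff_eq_0)
  show ?case
  proof (cases m)
    case 0
    then have "degree p = 0" using dp by simp
    then obtain p0 where p0: "p = [:p0:]" by (metis degree_eq_zeroE)
    have "r = [:p0:]" unfolding r_def p0 by simp
    then show ?thesis using 0 comp p0 by simp
  next
    case (Suc m')
    have IH: "coeff r (Suc m') = c^(Suc m') * coeff p (Suc m') \<and>
       coeff r m' = c^m' * (coeff p m' + of_nat (Suc m') * e * coeff p (Suc m'))"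
      unfolding r_def using pCons.IH[of m'] dp Suc by simp
    have "coeff (pcompose (pCons a p) [:e,c:]) (Suc m) = c^(Suc m) * coeff (pCons a p) (Suc m)"
      unfolding comp using IH r1 Suc by simp
    moreover have "coeff (pcompose (pCons a p) [:e,c:]) m = c^m * (coeff (pCons a p) m + of_nat (Suc m) * e * coeff (pCons a p) (Suc m))"
      unfolding comp using IH Suc by (simp add: algebra_simps)
    ultimately show ?thesis by simp
  qed
qed

lemma comp_scale_coeff: "coeff (pcompose p [:0,c:]) j = c^j * coeff p (j::nat)" for p :: "complex poly"
proof (induction p arbitrary: j rule: pCons_induct)
  case 0 then show ?case by simp
next
  case (pCons a p)
  show ?case by (cases j) (simp_all add: pcompose_pCons pCons.IH algebra_simps)
qed

lemma cheb_lin_rigid: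
  assumes k: "k \<ge> 3" and c0: "c \<noteq> 0"
    and eq: "pcompose (chT k) [:e,c:] = [:g:] + smult h (chT k)"
  shows "e = 0 \<and> (c = 1 \<or> c = -1)"
proof -
  obtain m where km: "k = Suc m" using k by (cases k) auto
  have m2: "m \<ge> 2" using k km by simp
  note cl = comp_lin_coeff[of "chT k" m e c]
  have A1: "coeff (pcompose (chT k) [:e,c:]) k = c^k" using cl km lead_chT[of k] k by simp
  have A2: "coeff (pcompose (chT k) [:e,c:]) m = c^m * (of_nat k * e)"
    using cl km lead_chT[of k] coeff1_chT[of k] k by simp
  have B1: "coeff ([:g:] + smult h (chT k)) k = h" using k km lead_chT[of k] by simp
  have B2: "coeff ([:g:] + smult h (chT k)) m = 0" using m2 km coeff1_chT[of k] coeff_const_pos[of m g] by simp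
  have "c^m * (of_nat k * e) = 0" using A2 B2 eq by simp
  then have e0: "e = 0" using c0 k by simp
  have C: "coeff (pcompose (chT k) [:0,c:]) (k-2) = c^(k-2) * (- of_nat k)"
    using comp_scale_coeff coeff2_chT[of k] k by simp
  have D: "coeff ([:g:] + smult h (chT k)) (k-2) = h * (- of_nat k)"
    using k coeff2_chT[of k] coeff_const_pos[of "k-2" g] by simp
  have hk: "h = c^k" using A1 B1 eq by simp
  have "c^(k-2) * (- of_nat k) = c^k * (- of_nat k)" using C D eq e0 hk by (simp; metis)
  then have "c^(k-2) = c^k" using k by simp
  moreover have "c^k = c^(k-2) * c^2"
  proof -
    have "k = (k-2) + 2" using k by simp
    then have "c^k = c^((k-2) + 2)" by simp
    then show ?thesis by (simp only: power_add)
  qed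
  ultimately have "c^(k-2) * (c^2 - 1) = 0" by (simp add: algebra_simps)
  then have "c^2 = 1" using c0 by simp
  then show ?thesis using e0 by (simp add: power2_eq_1_iff)
qed



lemma piter_0: "piter 0 f = [:0,1:]" by (simp add: piter_def)
lemma piter_Suc: "piter (Suc n) f = pcompose f (piter n f)" by (simp add: piter_def)
lemma piter_Suc': "piter (Suc n) f = pcompose (piter n f) f"
proof (induction n)
  case 0 then show ?case by (simp add: piter_0 piter_Suc)
next
  case (Suc n)
  have "piter (Suc (Suc n)) f = pcompose f (pcompose (piter n f) f)" using Suc by (simp add: piter_Suc)
  also have "\<dots> = pcompose (piter (Suc n) f) f" by (simp add: pcompose_assoc piter_Suc)
  finally show ?case .
qed

lemma degree_piter: "degree (piter n (f::complex poly)) = degree f ^ n"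
  by (induction n) (simp_all add: piter_0 piter_Suc degree_pcompose)

lemma piter_conj:
  assumes lm: "pcompose l m = [:0,1:]" and ml: "pcompose m l = [:0,1:]"
  shows "piter n (pcompose m (pcompose f l)) = pcompose m (pcompose (piter n f) (l::complex poly))"
proof (induction n)
  case 0 then show ?case by (simp add: piter_0 ml)
next
  case (Suc n)
  have c: "pcompose l (pcompose m Y) = Y" for Y by (simp add: pcompose_assoc lm)
  show ?case unfolding piter_Suc Suc by (simp add: pcompose_assoc[symmetric] c)
qed

lemma pcompose_power: "pcompose (p ^ k) q = (pcompose p q) ^ k"
  by (induction k) (simp_all add: pcompose_mult pcompose_1)

lemma single_root:
  fixes p :: "complex poly"
  assumes p0: "p \<noteq> 0" and roots: "\<And>y. poly p y = 0 \<Longrightarrow> y = a"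
  shows "p = smult (lead_coeff p) ([:-a,1:] ^ degree p)"
proof -
  obtain q where pq: "p = [:-a,1:] ^ order a p * q" and nd: "\<not> [:-a,1:] dvd q"
    using order_decomp[OF p0] by blast
  have "degree q = 0"
  proof (rule ccontr)
    assume "degree q \<noteq> 0"
    then obtain z where z: "poly q z = 0" using root_exists[of q] by auto
    have "poly p z = poly ([:-a,1:] ^ order a p) z * poly q z"
      using arg_cong[OF pq, of "\<lambda>t. poly t z"] by (simp only: poly_mult)
    then have "poly p z = 0" using z by simp
    then have "z = a" by (rule roots)
    then show False using z nd by (simp add: poly_eq_0_iff_dvd)
  qed
  then obtain q0 where q0: "q = [:q0:]" by (metis degree_eq_zeroE)
  have "q0 \<noteq> 0" using p0 pq q0 by auto
  define k where "k = order a p"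
  have pk: "p = smult q0 ([:-a,1:] ^ k)" using pq q0 unfolding k_def by simp
  have dk: "degree p = k" unfolding pk using \<open>q0 \<noteq> 0\<close> by (simp add: degree_power_eq)
  have lc: "lead_coeff p = q0"
  proof -
    have d: "degree ([:-a,1:]^k) = k" by (simp add: degree_power_eq)
    have "coeff ([:-a,1:]^k) k = 1" using lead_coeff_power[of "[:-a,1:]" k] d by simp
    then show ?thesis unfolding pk using d \<open>q0 \<noteq> 0\<close> by simp
  qed
  have "smult (lead_coeff p) ([:-a,1:] ^ degree p) = smult q0 ([:-a,1:] ^ k)" using lc unfolding dk by simp
  then show ?thesis using pk by simp
qed

lemma degree_diff_const: "degree p \<ge> 1 \<Longrightarrow> degree (p - [:y:]) = degree (p::complex poly)"
proof -
  assume "degree p \<ge> 1"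
  then have "degree (p + [:-y:]) = degree p" by (intro degree_add_eq_left) simp
  moreover have "p - [:y:] = p + [:-y:]" by (simp only: diff_conv_add_uminus) simp
  ultimately show ?thesis by metis
qed

lemma pow_ge: "r \<ge> 2 \<Longrightarrow> k \<ge> 1 \<Longrightarrow> r ^ k \<ge> (r::nat)"
  by (metis One_nat_def Suc_1 Suc_le_lessD le_less power_increasing power_one_right zero_less_Suc)

lemma power_core:
  fixes g Lam :: "complex poly"
  assumes dg: "degree g = r" "r \<ge> 2" and n2: "n \<ge> 2" and dL: "degree Lam = 1"
    and H: "piter n g = Lam ^ (r^n)"
  shows "\<exists>\<alpha>. \<alpha> \<noteq> 0 \<and> g = monom \<alpha> r"
proof -
  define e0 c where "e0 = coeff Lam 0" and "c = coeff Lam 1"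
  have lam: "Lam = [:e0, c:]" and c0: "c \<noteq> 0" using lin_dec[OF dL] unfolding e0_def c_def by auto
  define x0 where "x0 = - e0 / c"
  have Lz: "poly Lam z = 0 \<longleftrightarrow> z = x0" for z
  proof -
    have "poly Lam z = c * (z - x0)" unfolding lam x0_def using c0 by (simp add: field_simps)
    then show ?thesis using c0 by simp
  qed
  define N where "N = r^n"
  define P where "P = piter (n-1) g"
  have nP: "n = Suc (n-1)" using n2 by simp
  have gP: "pcompose g P = Lam ^ N" using H unfolding P_def N_def by (subst (asm) nP) (simp add: piter_Suc)
  have dP: "degree P = r^(n-1)" unfolding P_def degree_piter dg ..
  have "r ^ (n-1) \<ge> r" using pow_ge[OF dg(2), of "n-1"] n2 by simp
  then have dP2: "degree P \<ge> 2" unfolding dP using dg(2) by simp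
  have ev: "poly g (poly P z) = (poly Lam z) ^ N" for z
    using arg_cong[OF gP, of "\<lambda>t. poly t z"] by (simp add: poly_pcompose)
  have N0: "N \<noteq> 0" unfolding N_def using dg by simp
  define y0 where "y0 = poly P x0"
  have roots: "y = y0" if "poly g y = 0" for y
  proof -
    have "degree (P - [:y:]) = degree P" using dP2 by (simp add: degree_diff_const)
    then obtain z where z: "poly (P - [:y:]) z = 0" using root_exists[of "P - [:y:]"] dP2 by auto
    then have "poly P z = y" by simp
    then have "(poly Lam z)^N = 0" using ev[of z] that by simp
    then have "z = x0" using Lz N0 by simp
    then show ?thesis using \<open>poly P z = y\<close> y0_def by simp
  qed
  have g0: "g \<noteq> 0" using dg by auto
  define lc where "lc = lead_coeff g"
  have lc0: "lc \<noteq> 0" unfolding lc_def using g0 by simp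
  have gform: "g = smult lc ([:-y0,1:] ^ r)" using single_root[OF g0 roots] dg unfolding lc_def by simp
  have rootsP: "z = x0" if "poly (P - [:y0:]) z = 0" for z
  proof -
    have "poly P z = y0" using that by simp
    then have "poly g (poly P z) = 0" using dg by (subst gform) simp
    then have "(poly Lam z)^N = 0" using ev[of z] by simp
    then show ?thesis using Lz N0 by simp
  qed
  have dPy: "degree (P - [:y0:]) = degree P" using dP2 by (simp add: degree_diff_const)
  then have Py0: "P - [:y0:] \<noteq> 0" using dP2 by auto
  define d where "d = lead_coeff (P - [:y0:])"
  define M where "M = degree P"
  have d0: "d \<noteq> 0" unfolding d_def using Py0 leading_coeff_0_iff by blast
  have Pform: "P - [:y0:] = smult d ([:-x0,1:] ^ M)"
  proof -
    have sr: "P - [:y0:] = smult (lead_coeff (P - [:y0:])) ([:-x0,1:] ^ degree (P - [:y0:]))"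
      by (rule single_root[OF Py0]) (rule rootsP)
    show ?thesis using sr dPy unfolding d_def M_def by metis
  qed
  define Q where "Q = piter (n-2) g"
  have nQ: "n - 1 = Suc (n-2)" using n2 by simp
  have PQ: "P = pcompose g Q" unfolding P_def Q_def nQ piter_Suc ..
  have dQ: "degree Q \<ge> 1" unfolding Q_def degree_piter dg using dg by simp
  have PQ2: "P = smult lc (([:-y0:] + Q) ^ r)"
    unfolding PQ by (subst gform) (simp add: pcompose_smult pcompose_power pcompose_pCons)
  have "degree ([:-y0:] + Q) = degree Q" using dQ by (simp add: degree_add_eq_right)
  then obtain z where z: "poly ([:-y0:] + Q) z = 0" using root_exists[of "[:-y0:] + Q"] dQ by auto
  have r1: "r = Suc (r-1)" using dg by simp
  have rr: "(1::complex) + of_nat (r - Suc 0) = of_nat r"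
  proof -
    have "(of_nat r :: complex) = of_nat (Suc (r-1))" using r1 by simp
    then show ?thesis by simp
  qed
  have "poly (pderiv P) z = 0"
  proof -
    have "pderiv P = smult lc (smult (of_nat r) (([:-y0:] + Q) ^ (r-1)) * pderiv ([:-y0:] + Q))"
      unfolding PQ2 pderiv_smult by (subst r1, subst pderiv_power_Suc) (simp add: rr flip: r1)
    then show ?thesis using z dg by simp
  qed
  moreover have "pderiv P = smult d (smult (of_nat M) ([:-x0,1:] ^ (M-1)))"
  proof -
    have "pderiv P = pderiv (P - [:y0:])" by (simp add: pderiv_diff pderiv_pCons)
    also have "\<dots> = smult d (smult (of_nat M) ([:-x0,1:] ^ (M-1)))"
    proof -
      have M1: "M = Suc (M-1)" unfolding M_def using dP2 by simp
      have MM: "(1::complex) + of_nat (M - Suc 0) = of_nat M"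
      proof -
        have "(of_nat M :: complex) = of_nat (Suc (M-1))" using M1 by simp
        then show ?thesis by simp
      qed
      show ?thesis unfolding Pform pderiv_smult by (subst M1, subst pderiv_power_Suc) (simp add: pderiv_pCons MM flip: M1)
    qed
    finally show ?thesis .
  qed
  ultimately have "d * (of_nat M * (z - x0) ^ (M-1)) = 0" by simp
  moreover have "M \<noteq> 0" "M - 1 \<noteq> 0" unfolding M_def using dP2 by auto
  ultimately have zx: "z = x0" using d0 by simp
  have "poly P z = 0" unfolding PQ2 using z dg by simp
  moreover have "poly (P - [:y0:]) z = 0" unfolding Pform zx using \<open>M \<noteq> 0\<close> by simp
  ultimately have "y0 = 0" by simp
  then have "g = monom lc r" using gform by (simp add: monom_altdef)
  then show ?thesis using lc0 by blast
qed



lemma chT_scale_pm: "c = 1 \<or> c = -1 \<Longrightarrow> pcompose (chT k) [:0,c:] = smult (c^k) (chT k)"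
  using chT_neg[of k] by auto

lemma neg_comp: "pcompose [:0,-1:] Q = - (Q::complex poly)"
  by (simp add: pcompose_lin)

lemma piter_neg:
  assumes ev: "even r" and g: "g = - chT r"
  shows "piter (Suc k) g = - chT (r ^ Suc k)"
proof (induction k)
  case 0 then show ?case using g by (simp add: piter_Suc piter_0)
next
  case (Suc k)
  have "piter (Suc (Suc k)) g = pcompose g (piter (Suc k) g)" by (rule piter_Suc)
  also have "\<dots> = pcompose (- chT r) (- chT (r ^ Suc k))" using Suc g by simp
  also have "\<dots> = - pcompose (chT r) (- chT (r ^ Suc k))" by (simp add: pcompose_uminus)
  finally have "piter (Suc (Suc k)) g = - pcompose (chT r) (- chT (r ^ Suc k))" .
  also have "pcompose (chT r) (- chT (r ^ Suc k)) = pcompose (pcompose (chT r) [:0,-1:]) (chT (r ^ Suc k))"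
    by (simp add: pcompose_assoc[symmetric] neg_comp)
  also have "\<dots> = chT (r ^ Suc (Suc k))" using ev by (simp add: chT_neg chT_comp)
  finally show ?case .
qed

lemma sign_cases: "A = P \<or> A = - P \<Longrightarrow> \<exists>\<sigma>::complex. \<sigma>^2 = 1 \<and> A = smult \<sigma> P"
  by (metis power2_minus power_one smult_1_left smult_minus_left)

lemma cheb_core:
  fixes g Lam :: "complex poly"
  assumes dg: "degree g = r" "r \<ge> 2" and n2: "n \<ge> 2" and rn: "(r, n) \<noteq> (2, 2)"
    and dL: "degree Lam = 1" and H: "piter n g = pcompose (chT (r^n)) Lam"
  shows "\<exists>\<epsilon>\<in>{1, -1}. g = pcompose (chT r) [:0, \<epsilon>:]"
proof -
  define N where "N = r^n"
  define M where "M = r^(n-1)"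
  define Hh where "Hh = piter (n-1) g"
  have nS: "n = Suc (n-1)" using n2 by simp
  have e1: "pcompose g Hh = pcompose (chT N) Lam" using H unfolding Hh_def N_def
    by (subst (asm) nS) (simp add: piter_Suc)
  have e2: "pcompose Hh g = pcompose (chT N) Lam" using H unfolding Hh_def N_def
    by (subst (asm) nS) (simp add: piter_Suc')
  have dH: "degree Hh = M" unfolding Hh_def M_def degree_piter dg ..
  have M3: "M \<ge> 3"
  proof (cases "n = 2")
    case True
    then have "r \<noteq> 2" using rn by simp
    then show ?thesis using True dg unfolding M_def by simp
  next
    case False
    then have "n - 1 \<ge> 2" using n2 by simp
    then have "r^(n-1) \<ge> r^2" using dg by (intro power_increasing) auto
    moreover have "r^2 \<ge> 2^2" using dg by (intro power_mono) auto
    ultimately show ?thesis unfolding M_def by simp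
  qed
  have r1: "r \<ge> 1" and dg1: "degree g \<ge> 1" using dg by auto
  have M1: "M \<ge> 1" "degree Hh \<ge> 1" using M3 dH by auto
  obtain \<mu> where dmu: "degree \<mu> = 1" and gmu: "g = pcompose (chT r) \<mu> \<or> g = - pcompose (chT r) \<mu>"
    using rigid_outer[OF dL dg(1) r1 M1(2) e1] by blast
  obtain \<sigma> where sig: "\<sigma>^2 = 1" and gs: "g = smult \<sigma> (pcompose (chT r) \<mu>)"
    using sign_cases[OF gmu] by blast
  have "pcompose \<mu> Hh = pcompose (chT M) Lam \<or> pcompose \<mu> Hh = - pcompose (chT M) Lam"
    using rigid_inner[OF dL dmu r1 dH M1(1) sig] e1 unfolding gs by blast
  then obtain \<tau> where tau: "\<tau>^2 = 1" and muH: "pcompose \<mu> Hh = smult \<tau> (pcompose (chT M) Lam)"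
    using sign_cases by blast
  obtain \<nu> where dnu: "degree \<nu> = 1" and Hnu: "Hh = pcompose (chT M) \<nu> \<or> Hh = - pcompose (chT M) \<nu>"
    using rigid_outer[OF dL dH M1(1) dg1 e2] by blast
  obtain \<rho> where rho: "\<rho>^2 = 1" and Hr: "Hh = smult \<rho> (pcompose (chT M) \<nu>)"
    using sign_cases[OF Hnu] by blast
  define m0 m1 where "m0 = coeff \<mu> 0" and "m1 = coeff \<mu> 1"
  have mu: "\<mu> = [:m0, m1:]" and m10: "m1 \<noteq> 0" using lin_dec[OF dmu] unfolding m0_def m1_def by auto
  define Li where "Li = linv Lam"
  have Li: "pcompose Lam Li = [:0,1:]" "degree Li = 1" using linv_ok[OF dL] unfolding Li_def by auto
  define \<kappa> where "\<kappa> = pcompose \<nu> Li"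
  have dk: "degree \<kappa> = 1" unfolding \<kappa>_def degree_pcompose using dnu Li by simp
  define e c where "e = coeff \<kappa> 0" and "c = coeff \<kappa> 1"
  have ka: "\<kappa> = [:e, c:]" and c0: "c \<noteq> 0" using lin_dec[OF dk] unfolding e_def c_def by auto
  have rho0: "\<rho> \<noteq> 0" using rho by auto
  have eq3: "[:m0:] + smult (m1 * \<rho>) (pcompose (chT M) \<kappa>) = smult \<tau> (chT M)"
  proof -
    have "[:m0:] + smult (m1 * \<rho>) (pcompose (chT M) \<nu>) = smult \<tau> (pcompose (chT M) Lam)"
      using muH unfolding Hr mu pcompose_lin by simp
    then have "pcompose ([:m0:] + smult (m1 * \<rho>) (pcompose (chT M) \<nu>)) Li = pcompose (smult \<tau> (pcompose (chT M) Lam)) Li"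
      by simp
    then show ?thesis unfolding \<kappa>_def
      by (simp add: pcompose_add pcompose_smult pcompose_assoc[symmetric] Li)
  qed
  have mr0: "m1 * \<rho> \<noteq> 0" using m10 rho0 by simp
  have eq4: "pcompose (chT M) [:e, c:] = [:- m0 / (m1 * \<rho>):] + smult (\<tau> / (m1 * \<rho>)) (chT M)"
  proof -
    have "smult (m1 * \<rho>) (pcompose (chT M) \<kappa>) = smult \<tau> (chT M) - [:m0:]" using eq3 by (simp add: algebra_simps)
    then have "smult (1 / (m1 * \<rho>)) (smult (m1 * \<rho>) (pcompose (chT M) \<kappa>)) = smult (1 / (m1 * \<rho>)) (smult \<tau> (chT M) - [:m0:])"
      by simp
    then have "pcompose (chT M) [:e, c:] = smult (\<tau> / (m1 * \<rho>)) (chT M) - [:m0 / (m1 * \<rho>):]"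
      using mr0 unfolding ka by (simp add: smult_diff_right)
    moreover have "smult (\<tau> / (m1 * \<rho>)) (chT M) - [:m0 / (m1 * \<rho>):] = [:- m0 / (m1 * \<rho>):] + smult (\<tau> / (m1 * \<rho>)) (chT M)"
      by (simp add: diff_conv_add_uminus add.commute)
    ultimately show ?thesis by simp
  qed
  from cheb_lin_rigid[OF M3 c0 eq4] have e0: "e = 0" and cpm: "c = 1 \<or> c = -1" by auto
  have eq5: "smult (c^M) (chT M) = [:- m0 / (m1 * \<rho>):] + smult (\<tau> / (m1 * \<rho>)) (chT M)"
    using eq4 chT_scale_pm[OF cpm] e0 by simp
  have hM: "c^M = \<tau> / (m1 * \<rho>)"
  proof -
    have "coeff (smult (c^M) (chT M)) M = coeff ([:- m0 / (m1 * \<rho>):] + smult (\<tau> / (m1 * \<rho>)) (chT M)) M"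
      using eq5 by simp
    then show ?thesis using lead_chT[of M] M3 coeff_const_pos[of M] by simp
  qed
  have "[:- m0 / (m1 * \<rho>):] = 0" using eq5 hM by simp
  then have mm0: "m0 = 0" using mr0 by simp
  have c2: "c^2 = 1" using cpm by auto
  have "(c^M)^2 = (c^2)^M" by (simp only: power_mult[symmetric] mult.commute)
  then have "(c^M)^2 = 1" using c2 by simp
  then have "(\<tau> / (m1 * \<rho>))^2 = 1" using hM by simp
  then have "\<tau>^2 / (m1^2 * \<rho>^2) = 1" by (simp add: power_divide power_mult_distrib)
  then have "1 / m1^2 = 1" using tau rho by simp
  then have "m1^2 = 1" by (simp add: field_simps)
  then have m1pm: "m1 = 1 \<or> m1 = -1" by (simp add: power2_eq_1_iff)
  have gform: "g = smult (\<sigma> * m1^r) (chT r)"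
    unfolding gs mu mm0 using chT_scale_pm[OF m1pm, of r] by simp
  define s where "s = \<sigma> * m1^r"
  have m12: "m1^2 = 1" using m1pm by auto
  have "(m1^r)^2 = (m1^2)^r" by (simp only: power_mult[symmetric] mult.commute)
  then have s2: "s^2 = 1" unfolding s_def using sig m12 by (simp add: power_mult_distrib)
  then have spm: "s = 1 \<or> s = -1" by (simp add: power2_eq_1_iff)
  show ?thesis
  proof (cases "s = 1")
    case True
    then show ?thesis using gform unfolding s_def by (intro bexI[of _ 1]) auto
  next
    case False
    then have sm: "s = -1" using spm by simp
    show ?thesis
    proof (cases "even r")
      case False
      then have "pcompose (chT r) [:0, -1:] = - chT r" using chT_scale_pm[of "-1" r] by simp
      then show ?thesis using gform sm unfolding s_def by (intro bexI[of _ "-1"]) auto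
    next
      case True
      have gm: "g = - chT r" using gform sm unfolding s_def by simp
      have "piter n g = - chT N" using piter_neg[OF True gm, of "n-1"] nS unfolding N_def by simp
      then have eqN: "pcompose (chT N) Lam = [:0:] + smult (-1) (chT N)" using H unfolding N_def by simp
      define e' c' where "e' = coeff Lam 0" and "c' = coeff Lam 1"
      have la: "Lam = [:e', c':]" and c'0: "c' \<noteq> 0" using lin_dec[OF dL] unfolding e'_def c'_def by auto
      have "N = r * M" unfolding N_def M_def by (subst nS) simp
      then have N3: "N \<ge> 3" using M3 dg(2) by (metis le_trans mult_le_mono1 mult_1 one_le_numeral le_trans[of 1 2 r] one_le_numeral)
      from cheb_lin_rigid[OF N3 c'0 eqN[unfolded la]] have "e' = 0" "c' = 1 \<or> c' = -1" by auto
      moreover have "even N" unfolding N_def using True n2 by simp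
      ultimately have "pcompose (chT N) Lam = chT N" unfolding la using chT_scale_pm[of c' N] by auto
      then have "chT N = - chT N" using eqN by simp
      then have "chT N = 0" by simp
      then show ?thesis using N3 degree_chT[of N] by simp
    qed
  qed
qed



lemma pcompose_monom1: "pcompose (monom 1 k) q = q ^ k" for q :: "complex poly"
proof -
  have "monom (1::complex) k = [:0,1:] ^ k" by (simp add: monom_altdef)
  then show ?thesis by (simp add: pcompose_power)
qed

theorem mainTheorem6:
  fixes f l lh :: "complex poly" and n :: nat
  assumes "degree f > 1" and "degree l = 1" and "degree lh = 1" and "n \<ge> 2"
  shows "(piter n f = pcompose l (pcompose (monom 1 (degree f ^ n)) lh) \<longrightarrow>
            (\<exists>\<alpha>. \<alpha> \<noteq> 0 \<and> f = pcompose l (pcompose (monom \<alpha> (degree f)) (linv l))))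
       \<and> (piter n f = pcompose l (pcompose (cheb (degree f ^ n)) lh) \<and> (degree f, n) \<noteq> (2, 2) \<longrightarrow>
            (\<exists>\<epsilon>\<in>{1, -1}. f = pcompose l (pcompose (cheb (degree f)) (smult \<epsilon> (linv l)))))"
proof -
  define r where "r = degree f"
  have r2: "r \<ge> 2" using assms(1) unfolding r_def by simp
  define m where "m = linv l"
  have lm: "pcompose l m = [:0,1:]" and ml: "pcompose m l = [:0,1:]" and dm: "degree m = 1"
    using linv_ok[OF assms(2)] unfolding m_def by auto
  have c1: "pcompose l (pcompose m Y) = Y" for Y by (simp add: pcompose_assoc lm)
  have c2: "pcompose m (pcompose l Y) = Y" for Y by (simp add: pcompose_assoc ml)
  define g where "g = pcompose m (pcompose f l)"
  have dg: "degree g = r" unfolding g_def r_def degree_pcompose using dm assms(2) by simp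
  have conj: "piter n g = pcompose m (pcompose (piter n f) l)" unfolding g_def by (rule piter_conj[OF lm ml])
  define Lam where "Lam = pcompose lh l"
  have dL: "degree Lam = 1" unfolding Lam_def degree_pcompose using assms by simp
  have fback: "f = pcompose l (pcompose g m)" unfolding g_def
    by (simp add: pcompose_assoc[symmetric] c1) (simp add: pcompose_assoc lm)
  have core: "piter n f = pcompose l (pcompose Q lh) \<Longrightarrow> piter n g = pcompose Q Lam" for Q
    unfolding conj Lam_def by (simp add: pcompose_assoc[symmetric] c2)
  show ?thesis
  proof (intro conjI impI)
    assume h: "piter n f = pcompose l (pcompose (monom 1 (degree f ^ n)) lh)"
    have "piter n g = pcompose (monom 1 (r ^ n)) Lam" by (rule core) (use h in \<open>simp only: r_def\<close>)
    also have "\<dots> = Lam ^ (r^n)" by (rule pcompose_monom1)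
    finally have Hg: "piter n g = Lam ^ (r^n)" .
    from power_core[OF dg r2 assms(4) dL Hg] obtain \<alpha> where a0: "\<alpha> \<noteq> 0" and ga: "g = monom \<alpha> r"
      by blast
    have "f = pcompose l (pcompose (monom \<alpha> (degree f)) (linv l))"
      using fback unfolding ga m_def r_def .
    then show "\<exists>\<alpha>. \<alpha> \<noteq> 0 \<and> f = pcompose l (pcompose (monom \<alpha> (degree f)) (linv l))"
      using a0 by blast
  next
    assume h: "piter n f = pcompose l (pcompose (cheb (degree f ^ n)) lh) \<and> (degree f, n) \<noteq> (2, 2)"
    have "piter n g = pcompose (chT (r ^ n)) Lam" by (rule core) (use h in \<open>simp only: r_def cheb_eq\<close>)
    moreover have "(r, n) \<noteq> (2, 2)" using h unfolding r_def by simp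
    ultimately obtain \<epsilon> where eps: "\<epsilon> \<in> {1, -1}" and ge: "g = pcompose (chT r) [:0, \<epsilon>:]"
      using cheb_core[OF dg r2 assms(4) _ dL] by blast
    have "f = pcompose l (pcompose (chT r) (pcompose [:0, \<epsilon>:] m))"
      using fback ge by (simp add: pcompose_assoc)
    also have "pcompose [:0, \<epsilon>:] m = smult \<epsilon> m" by (simp add: pcompose_lin)
    finally have "f = pcompose l (pcompose (cheb (degree f)) (smult \<epsilon> (linv l)))"
      unfolding m_def r_def cheb_eq .
    then show "\<exists>\<epsilon>\<in>{1, -1}. f = pcompose l (pcompose (cheb (degree f)) (smult \<epsilon> (linv l)))"
      using eps by blast
  qed
qed

end
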